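(* Any two of the following three equalities imply the third: (i) $c_{n,k}=\prod_{j=k}^{n-1}\frac{g_{j+1}}{h_n-h_j}$ for $0\le k<n$ and $c_{n,n}=1$; (ii) $Lu_n=h_nu_n$ for all $n\ge0$; (iii) $Lv_n=h_nv_n+g_nv_{n-1}$ for $n>0$ and $Lv_0=h_0v_0$.
   Context: Let $h_k$, $x_k$, $g_k$ ($k=0,1,2,\ldots$) be given sequences such that all $h_k$ are distinct. Define monic Newton type polynomials $v_k(x)=(x-x_0)(x-x_1)\cdots(x-x_{k-1})$ for $k\ge1$ and $v_0(x)=1$. Let $u_n(x)=\sum_{k=0}^n c_{n,k}\,v_k(x)$ be monic polynomials of degree $n$ (so $c_{n,n}=1$), and let $L$ be a linear operator on the space of polynomials. *)

theory Defs
  imports "HOL-Computational_Algebra.Polynomial"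
begin

definition newton_poly :: "(nat \<Rightarrow> 'a::field) \<Rightarrow> nat \<Rightarrow> 'a poly" where
  "newton_poly x k = (\<Prod>i<k. [:- x i, 1:])"

definition u_poly :: "(nat \<Rightarrow> 'a::field) \<Rightarrow> (nat \<Rightarrow> nat \<Rightarrow> 'a) \<Rightarrow> nat \<Rightarrow> 'a poly" where
  "u_poly x c n = (\<Sum>k\<le>n. smult (c n k) (newton_poly x k))"

definition linear_poly_op :: "('a::field poly \<Rightarrow> 'a poly) \<Rightarrow> bool" where
  "linear_poly_op L \<longleftrightarrow> (\<forall>p q. L (p + q) = L p + L q) \<and> (\<forall>a p. L (smult a p) = smult a (L p))"

definition cond_i :: "(nat \<Rightarrow> 'a::field) \<Rightarrow> (nat \<Rightarrow> 'a) \<Rightarrow> (nat \<Rightarrow> nat \<Rightarrow> 'a) \<Rightarrow> bool" where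
  "cond_i h g c \<longleftrightarrow>
     (\<forall>n k. k < n \<longrightarrow> c n k = (\<Prod>j=k..<n. g (j + 1) / (h n - h j))) \<and> (\<forall>n. c n n = 1)"

definition cond_ii :: "('a::field poly \<Rightarrow> 'a poly) \<Rightarrow> (nat \<Rightarrow> 'a) \<Rightarrow> (nat \<Rightarrow> 'a) \<Rightarrow> (nat \<Rightarrow> nat \<Rightarrow> 'a) \<Rightarrow> bool" where
  "cond_ii L h x c \<longleftrightarrow> (\<forall>n. L (u_poly x c n) = smult (h n) (u_poly x c n))"

definition cond_iii :: "('a::field poly \<Rightarrow> 'a poly) \<Rightarrow> (nat \<Rightarrow> 'a) \<Rightarrow> (nat \<Rightarrow> 'a) \<Rightarrow> (nat \<Rightarrow> 'a) \<Rightarrow> bool" where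
  "cond_iii L h x g \<longleftrightarrow>
     (\<forall>n>0. L (newton_poly x n) = smult (h n) (newton_poly x n) + smult (g n) (newton_poly x (n - 1))) \<and>
     L (newton_poly x 0) = smult (h 0) (newton_poly x 0)"

end

theory Submission
  imports Defs
begin

lemma np_Suc: "newton_poly x (Suc k) = newton_poly x k * [:- x k, 1:]"
  by (simp add: newton_poly_def)

lemma np_deg: "degree (newton_poly x k) = k \<and> coeff (newton_poly x k) k = 1"
proof (induction k)
  case 0 then show ?case by (simp add: newton_poly_def)
next
  case (Suc k)
  have nz: "newton_poly x k \<noteq> 0" using Suc by auto
  have "degree (newton_poly x k * [:- x k, 1:]) = degree (newton_poly x k) + degree [:- x k, 1:]"
    by (rule degree_mult_eq) (use nz in auto)
  then have d: "degree (newton_poly x (Suc k)) = Suc k"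
    using Suc by (simp only: np_Suc) simp
  have "coeff (newton_poly x (Suc k)) (Suc k) = lead_coeff (newton_poly x k) * lead_coeff [:- x k, 1:]"
    using d by (metis lead_coeff_mult np_Suc)
  then show ?case using d Suc by simp
qed

lemma np_indep:
  "(\<Sum>k<n. smult (a k) (newton_poly x k)) = 0 \<Longrightarrow> \<forall>k<n. a k = 0"
proof (induction n)
  case 0 then show ?case by simp
next
  case (Suc n)
  let ?S = "\<Sum>k<n. smult (a k) (newton_poly x k)"
  have c0: "coeff ?S n = 0"
    unfolding coeff_sum coeff_smult
  proof (rule sum.neutral, rule ballI)
    fix k assume "k \<in> {..<n}"
    then have "degree (newton_poly x k) < n" using np_deg[of x k] by simp
    then show "a k * coeff (newton_poly x k) n = 0" by (simp add: coeff_eq_0)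
  qed
  have S: "?S + smult (a n) (newton_poly x n) = 0" using Suc.prems by simp
  have "coeff (?S + smult (a n) (newton_poly x n)) n = a n"
    unfolding coeff_add coeff_smult c0 using np_deg[of x n] by simp
  then have an: "a n = 0" using S by simp
  then have "?S = 0" using S by simp
  then show ?case using Suc.IH an less_Suc_eq by auto
qed

lemma lin_zero: "linear_poly_op L \<Longrightarrow> L 0 = 0"
  unfolding linear_poly_op_def by (metis add_cancel_right_right add_0)

lemma lin_sum:
  assumes "linear_poly_op L"
  shows "L (\<Sum>k\<in>A. smult (a k) (p k)) = (\<Sum>k\<in>A. smult (a k) (L (p k)))"
proof (induction A rule: infinite_finite_induct)
  case (infinite A) then show ?case using lin_zero[OF assms] by simp
next
  case empty then show ?case using lin_zero[OF assms] by simp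
next
  case (insert y F) then show ?case using assms unfolding linear_poly_op_def by simp
qed

lemma smult_sum_right: "smult a (\<Sum>i\<in>S. f i) = (\<Sum>i\<in>S. smult a (f i))"
  by (induction S rule: infinite_finite_induct) (simp_all add: smult_add_right)

lemma grp_id: "(a::'b::ab_group_add) + (b + c) - (d + e) = a - d - w + ((c + w) + b - e)"
  by (simp add: algebra_simps)

definition wp :: "(nat \<Rightarrow> 'a::field) \<Rightarrow> (nat \<Rightarrow> 'a) \<Rightarrow> nat \<Rightarrow> 'a poly" where
  "wp x g k = (if k = 0 then 0 else smult (g k) (newton_poly x (k - 1)))"

lemma iii_alt: "cond_iii L h x g \<longleftrightarrow> (\<forall>k. L (newton_poly x k) = smult (h k) (newton_poly x k) + wp x g k)"
proof
  assume H: "cond_iii L h x g"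
  show "\<forall>k. L (newton_poly x k) = smult (h k) (newton_poly x k) + wp x g k"
  proof
    fix k show "L (newton_poly x k) = smult (h k) (newton_poly x k) + wp x g k"
      using H unfolding cond_iii_def wp_def by (cases "k = 0") auto
  qed
next
  assume H: "\<forall>k. L (newton_poly x k) = smult (h k) (newton_poly x k) + wp x g k"
  show "cond_iii L h x g" unfolding cond_iii_def
  proof (intro conjI allI impI)
    fix n :: nat assume "n > 0"
    then show "L (newton_poly x n) = smult (h n) (newton_poly x n) + smult (g n) (newton_poly x (n - 1))"
      using H[rule_format, of n] by (simp add: wp_def)
  next
    show "L (newton_poly x 0) = smult (h 0) (newton_poly x 0)"
      using H[rule_format, of 0] by (simp add: wp_def)
  qed
qed

lemma keyA:
  assumes lin: "linear_poly_op L" and cnn: "c n n = 1"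
    and IH: "\<forall>k<n. L (newton_poly x k) = smult (h k) (newton_poly x k) + wp x g k"
  shows "L (u_poly x c n) - smult (h n) (u_poly x c n) =
     (L (newton_poly x n) - smult (h n) (newton_poly x n) - wp x g n) +
     (\<Sum>k<n. smult (g (Suc k) * c n (Suc k) - c n k * (h n - h k)) (newton_poly x k))"
proof -
  let ?v = "newton_poly x"
  have u: "u_poly x c n = ?v n + (\<Sum>k<n. smult (c n k) (?v k))"
    unfolding u_poly_def using cnn by (simp add: lessThan_Suc_atMost[symmetric])
  have Lu: "L (u_poly x c n) = L (?v n) + (\<Sum>k<n. smult (c n k) (smult (h k) (?v k) + wp x g k))"
    using lin_sum[OF lin, of "c n" ?v "{..<n}"] IH lin unfolding u linear_poly_op_def by simp
  have w: "(\<Sum>k<n. smult (c n k) (wp x g k)) + wp x g n = (\<Sum>k<n. smult (g (Suc k) * c n (Suc k)) (?v k))"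
  proof -
    have "(\<Sum>k<n. smult (c n k) (wp x g k)) + wp x g n = (\<Sum>k<Suc n. smult (c n k) (wp x g k))"
      using cnn by simp
    also have "\<dots> = (\<Sum>k<n. smult (c n (Suc k)) (wp x g (Suc k)))"
      by (subst sum.lessThan_Suc_shift) (simp add: wp_def)
    also have "\<dots> = (\<Sum>k<n. smult (g (Suc k) * c n (Suc k)) (?v k))"
      by (simp add: wp_def mult.commute)
    finally show ?thesis .
  qed
  have e: "(\<Sum>k<n. smult (g (Suc k) * c n (Suc k) - c n k * (h n - h k)) (?v k)) =
     (\<Sum>k<n. smult (g (Suc k) * c n (Suc k)) (?v k)) + (\<Sum>k<n. smult (c n k) (smult (h k) (?v k)))
      - smult (h n) (\<Sum>k<n. smult (c n k) (?v k))"
  proof -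
    have t: "smult (g (Suc k) * c n (Suc k) - c n k * (h n - h k)) (?v k) =
       smult (g (Suc k) * c n (Suc k)) (?v k) + smult (c n k) (smult (h k) (?v k))
       - smult (h n) (smult (c n k) (?v k))" for k
      by (rule poly_eqI) (simp add: algebra_simps)
    show ?thesis unfolding t sum_subtractf sum.distrib smult_sum_right ..
  qed
  have Lu2: "L (u_poly x c n) = L (?v n) + ((\<Sum>k<n. smult (c n k) (smult (h k) (?v k))) + (\<Sum>k<n. smult (c n k) (wp x g k)))"
    unfolding Lu smult_add_right sum.distrib ..
  have hu: "smult (h n) (u_poly x c n) = smult (h n) (?v n) + smult (h n) (\<Sum>k<n. smult (c n k) (?v k))"
    unfolding u smult_add_right ..
  let ?B = "\<Sum>k<n. smult (c n k) (smult (h k) (?v k))"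
  let ?C = "\<Sum>k<n. smult (c n k) (wp x g k)"
  let ?S = "smult (h n) (\<Sum>k<n. smult (c n k) (?v k))"
  let ?G = "\<Sum>k<n. smult (g (Suc k) * c n (Suc k)) (?v k)"
  have "L (u_poly x c n) - smult (h n) (u_poly x c n) = (L (?v n) + (?B + ?C)) - (smult (h n) (?v n) + ?S)"
    by (simp only: Lu2 hu)
  also have "\<dots> = L (?v n) - smult (h n) (?v n) - wp x g n + ((?C + wp x g n) + ?B - ?S)"
    by (rule grp_id)
  also have "\<dots> = L (?v n) - smult (h n) (?v n) - wp x g n + (?G + ?B - ?S)"
    by (simp only: w)
  also have "\<dots> = L (?v n) - smult (h n) (?v n) - wp x g n + (\<Sum>k<n. smult (g (Suc k) * c n (Suc k) - c n k * (h n - h k)) (?v k))"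
    by (simp only: e)
  finally show ?thesis .
qed

lemma R_fwd:
  assumes ci: "cond_i h g c" and inj: "inj h" and kn: "k < n"
  shows "g (Suc k) * c n (Suc k) - c n k * (h n - h k) = 0"
proof -
  let ?f = "\<lambda>j. g (j + 1) / (h n - h j)"
  have hne: "h n - h k \<noteq> 0" using inj kn by (metis eq_iff_diff_eq_0 injD less_irrefl)
  have ck: "c n k = ?f k * prod ?f {Suc k..<n}"
    using ci kn unfolding cond_i_def by (simp add: prod.atLeast_Suc_lessThan)
  have cs: "c n (Suc k) = prod ?f {Suc k..<n}"
  proof (cases "Suc k < n")
    case True then show ?thesis using ci unfolding cond_i_def by simp
  next
    case False then have "Suc k = n" using kn by simp
    then show ?thesis using ci unfolding cond_i_def by simp
  qed
  show ?thesis unfolding ck cs using hne by (simp add: field_simps)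
qed

lemma R_bwd:
  assumes e: "\<forall>n k. k < n \<longrightarrow> g (Suc k) * c n (Suc k) - c n k * (h n - h k) = 0"
    and inj: "inj h" and cnn: "\<forall>n. c n n = 1"
  shows "cond_i h g c"
proof -
  have main: "k < n \<Longrightarrow> c n k = (\<Prod>j=k..<n. g (j + 1) / (h n - h j))" for n k
  proof (induction "n - k" arbitrary: k)
    case 0 then show ?case by simp
  next
    case (Suc d)
    let ?f = "\<lambda>j. g (j + 1) / (h n - h j)"
    have hne: "h n - h k \<noteq> 0" using inj Suc.prems by (metis eq_iff_diff_eq_0 injD less_irrefl)
    have ck: "c n k = g (Suc k) * c n (Suc k) / (h n - h k)"
      using e[rule_format, OF Suc.prems] hne by (simp add: field_simps)
    have cs: "c n (Suc k) = prod ?f {Suc k..<n}"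
    proof (cases "Suc k < n")
      case True then show ?thesis using Suc.hyps(1)[of "Suc k"] Suc.hyps(2) by simp
    next
      case False then have "Suc k = n" using Suc.prems by simp
      then show ?thesis using cnn by simp
    qed
    show ?case unfolding ck cs using Suc.prems by (simp add: prod.atLeast_Suc_lessThan)
  qed
  show ?thesis unfolding cond_i_def using main cnn by blast
qed

theorem mainTheorem1:
  fixes h x g :: "nat \<Rightarrow> 'a::field"
    and c :: "nat \<Rightarrow> nat \<Rightarrow> 'a"
    and L :: "'a poly \<Rightarrow> 'a poly"
  assumes "inj h"
    and "\<forall>n. c n n = 1"
    and "linear_poly_op L"
  shows "(cond_i h g c \<and> cond_ii L h x c \<longrightarrow> cond_iii L h x g) \<and>
         (cond_i h g c \<and> cond_iii L h x g \<longrightarrow> cond_ii L h x c) \<and>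
         (cond_ii L h x c \<and> cond_iii L h x g \<longrightarrow> cond_i h g c)"
proof (intro conjI impI; elim conjE)
  assume ci: "cond_i h g c" and cii: "cond_ii L h x c"
  have "L (newton_poly x n) = smult (h n) (newton_poly x n) + wp x g n" for n
  proof (induction n rule: less_induct)
    case (less n)
    have z1: "L (u_poly x c n) - smult (h n) (u_poly x c n) = 0"
      using cii unfolding cond_ii_def by simp
    have z2: "(\<Sum>k<n. smult (g (Suc k) * c n (Suc k) - c n k * (h n - h k)) (newton_poly x k)) = 0"
      using R_fwd[OF ci assms(1)] by simp
    have "L (newton_poly x n) - smult (h n) (newton_poly x n) - wp x g n = 0"
      using keyA[where L=L and c=c and n=n and x=x and h=h and g=g, OF assms(3) assms(2)[rule_format]] less z1 z2 by simp
    then show ?case by (simp add: algebra_simps)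
  qed
  then show "cond_iii L h x g" unfolding iii_alt by blast
next
  assume ci: "cond_i h g c" and ciii: "cond_iii L h x g"
  show "cond_ii L h x c" unfolding cond_ii_def
  proof
    fix n
    have z2: "(\<Sum>k<n. smult (g (Suc k) * c n (Suc k) - c n k * (h n - h k)) (newton_poly x k)) = 0"
      using R_fwd[OF ci assms(1)] by simp
    have "L (u_poly x c n) - smult (h n) (u_poly x c n) = 0"
      using keyA[where L=L and c=c and n=n and x=x and h=h and g=g, OF assms(3) assms(2)[rule_format]] ciii z2
      unfolding iii_alt by simp
    then show "L (u_poly x c n) = smult (h n) (u_poly x c n)" by simp
  qed
next
  assume cii: "cond_ii L h x c" and ciii: "cond_iii L h x g"
  have "\<forall>k<n. g (Suc k) * c n (Suc k) - c n k * (h n - h k) = 0" for n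
  proof (rule np_indep)
    have z1: "L (u_poly x c n) - smult (h n) (u_poly x c n) = 0"
      using cii unfolding cond_ii_def by simp
    show "(\<Sum>k<n. smult (g (Suc k) * c n (Suc k) - c n k * (h n - h k)) (newton_poly x k)) = 0"
      using keyA[where L=L and c=c and n=n and x=x and h=h and g=g, OF assms(3) assms(2)[rule_format]] ciii z1
      unfolding iii_alt by simp
  qed
  then show "cond_i h g c" using R_bwd assms(1,2) by blast
qed

end
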